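(* Let $X$ be a real Hausdorff locally convex topological vector space and let $f,g:X\to\overline{\mathbb R}$ be proper, convex and lower semicontinuous. Let $U\subseteq\operatorname{dom} f\cap\operatorname{dom} g$ be segment-dense in $\operatorname{dom} f\cap\operatorname{dom} g$ and suppose $f(u)=g(u)$ for all $u\in U$. Then $f=g$ on $\operatorname{dom} f\cap\operatorname{dom} g$.
   Context: $\overline{\mathbb R}=\mathbb R\cup\{\pm\infty\}$; $\operatorname{dom} f=\{x:f(x)<+\infty\}$; proper: $\operatorname{dom} f\ne\emptyset$ and $f>-\infty$. $[x,y]=\{x+t(y-x):t\in[0,1]\}$. Definition (segment-dense): for a convex set $V$ and $U\subseteq V$, $U$ is segment-dense in $V$ if for each $x\in V$ there exists $y\in U$ such that $x$ is a cluster point of $[x,y]\cap U$. *)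

theory Defs
  imports "HOL-Analysis.Analysis"
begin

definition locally_convex_tvs :: "'a::{real_vector, t2_space} itself \<Rightarrow> bool" where
  "locally_convex_tvs _ \<longleftrightarrow>
     continuous_on UNIV (\<lambda>(x::'a, y::'a). x + y) \<and>
     continuous_on UNIV (\<lambda>(c::real, x::'a). c *\<^sub>R x) \<and>
     (\<forall>W::'a set. open W \<and> 0 \<in> W \<longrightarrow> (\<exists>V. open V \<and> convex V \<and> 0 \<in> V \<and> V \<subseteq> W))"

definition edom :: "('a \<Rightarrow> ereal) \<Rightarrow> 'a set" where
  "edom f = {x. f x < \<infinity>}"

definition proper_fun :: "('a \<Rightarrow> ereal) \<Rightarrow> bool" where
  "proper_fun f \<longleftrightarrow> edom f \<noteq> {} \<and> (\<forall>x. f x > -\<infinity>)"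

definition convex_efun :: "('a::real_vector \<Rightarrow> ereal) \<Rightarrow> bool" where
  "convex_efun f \<longleftrightarrow> convex {(x, t::real). f x \<le> ereal t}"

definition lsc_efun :: "('a::topological_space \<Rightarrow> ereal) \<Rightarrow> bool" where
  "lsc_efun f \<longleftrightarrow> (\<forall>c::ereal. closed {x. f x \<le> c})"

definition segment_dense :: "'a::{real_vector, topological_space} set \<Rightarrow> 'a set \<Rightarrow> bool" where
  "segment_dense U V \<longleftrightarrow> (\<forall>x\<in>V. \<exists>y\<in>U. x islimpt (closed_segment x y \<inter> U))"

end

theory Submission
  imports Defs
begin

lemma seg_cont:
  fixes x y :: "'a::{real_vector, t2_space}"
  assumes "locally_convex_tvs TYPE('a)"
  shows "continuous_on UNIV (\<lambda>u::real. (1-u) *\<^sub>R x + u *\<^sub>R y)"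
proof -
  have a: "continuous_on UNIV (\<lambda>(x::'a, y::'a). x + y)"
   and s: "continuous_on UNIV (\<lambda>(c::real, x::'a). c *\<^sub>R x)"
    using assms unfolding locally_convex_tvs_def by auto
  have c1: "continuous_on UNIV (\<lambda>u::real. (1-u, x))"
    by (intro continuous_intros)
  have c2: "continuous_on UNIV (\<lambda>u::real. (u, y))"
    by (intro continuous_intros)
  have d1: "continuous_on UNIV (\<lambda>u::real. (1-u) *\<^sub>R x)"
    using continuous_on_compose[OF c1 continuous_on_subset[OF s]] by (simp add: o_def)
  have d2: "continuous_on UNIV (\<lambda>u::real. u *\<^sub>R y)"
    using continuous_on_compose[OF c2 continuous_on_subset[OF s]] by (simp add: o_def)
  have e: "continuous_on UNIV (\<lambda>u::real. ((1-u) *\<^sub>R x, u *\<^sub>R y))"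
    using continuous_on_Pair[OF d1 d2] .
  show ?thesis
    using continuous_on_compose[OF e continuous_on_subset[OF a]] by (simp add: o_def)
qed

lemma half_ineq:
  fixes f g :: "'a::{real_vector, t2_space} \<Rightarrow> ereal" and U :: "'a set"
  assumes lc: "locally_convex_tvs TYPE('a)"
    and pf: "proper_fun f" and lf: "lsc_efun f"
    and pg: "proper_fun g" and cg: "convex_efun g"
    and U: "U \<subseteq> edom f \<inter> edom g"
    and sd: "segment_dense U (edom f \<inter> edom g)"
    and eq: "\<forall>u\<in>U. f u = g u"
    and x: "x \<in> edom f \<inter> edom g"
  shows "f x \<le> g x"
proof (rule ccontr)
  assume "\<not> f x \<le> g x"
  hence lt: "g x < f x" by simp
  obtain y where yU: "y \<in> U" and lim: "x islimpt (closed_segment x y \<inter> U)"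
    using sd x unfolding segment_dense_def by blast
  have "y \<noteq> x"
  proof
    assume "y = x"
    hence "closed_segment x y \<inter> U \<subseteq> {x}" by simp
    hence "finite (closed_segment x y \<inter> U)" using finite_subset by blast
    thus False using lim islimpt_finite by blast
  qed
  have fxr: "f x = ereal (real_of_ereal (f x))"
    using x pf unfolding edom_def proper_fun_def by (cases "f x") auto
  have gxr: "g x = ereal (real_of_ereal (g x))"
    using x pg unfolding edom_def proper_fun_def by (cases "g x") auto
  have gyr: "g y = ereal (real_of_ereal (g y))"
    using yU U pg unfolding edom_def proper_fun_def by (cases "g y") auto
  define fx where "fx = real_of_ereal (f x)"
  define gx where "gx = real_of_ereal (g x)"
  define gy where "gy = real_of_ereal (g y)"
  have "gx < fx" using lt fxr gxr fx_def gx_def by (metis ereal_less(2) ereal_less_eq(3) not_le)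
  define c where "c = (gx + fx) / 2"
  have gc: "gx < c" and cf: "c < fx" using \<open>gx < fx\<close> c_def by auto
  define \<delta> where "\<delta> = min 1 ((c - gx) / (\<bar>gy - gx\<bar> + 1))"
  have dpos: "\<delta> > 0" using gc \<delta>_def by auto
  have small: "gx + t * (gy - gx) < c" if "0 \<le> t" "t < \<delta>" for t
  proof -
    have "t * (gy - gx) \<le> t * (\<bar>gy - gx\<bar> + 1)"
      using that by (intro mult_left_mono) auto
    also have "\<dots> < \<delta> * (\<bar>gy - gx\<bar> + 1)"
      using that by (intro mult_strict_right_mono) auto
    also have "\<dots> \<le> ((c - gx) / (\<bar>gy - gx\<bar> + 1)) * (\<bar>gy - gx\<bar> + 1)"
      by (intro mult_right_mono) (auto simp: \<delta>_def)
    also have "\<dots> = c - gx" by simp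
    finally show ?thesis by simp
  qed
  define K where "K = (\<lambda>u::real. (1-u) *\<^sub>R x + u *\<^sub>R y) ` {\<delta>..1}"
  have "compact K" unfolding K_def
    by (intro compact_continuous_image continuous_on_subset[OF seg_cont[OF lc]]) auto
  hence cK: "closed K" by (rule compact_imp_closed)
  have xK: "x \<notin> K"
  proof
    assume "x \<in> K"
    then obtain u where u: "\<delta> \<le> u" "(1-u) *\<^sub>R x + u *\<^sub>R y = x" unfolding K_def by auto
    hence "u *\<^sub>R (y - x) = 0" by (simp add: algebra_simps)
    thus False using u dpos \<open>y \<noteq> x\<close> by auto
  qed
  have cl: "closed {z. f z \<le> ereal c}" using lf unfolding lsc_efun_def by blast
  define W where "W = - {z. f z \<le> ereal c} \<inter> - K"
  have oW: "open W" unfolding W_def using cl cK by auto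
  have xW: "x \<in> W" unfolding W_def using xK cf fxr fx_def by (metis ComplI Int_iff ereal_less_eq(3) linorder_not_le mem_Collect_eq)
  obtain z where zS: "z \<in> closed_segment x y \<inter> U" and zW: "z \<in> W" and "z \<noteq> x"
    using lim oW xW unfolding islimpt_def by blast
  then obtain u where u: "0 \<le> u" "u \<le> 1" "z = (1-u) *\<^sub>R x + u *\<^sub>R y"
    unfolding closed_segment_def by auto
  have "u < \<delta>"
  proof (rule ccontr)
    assume "\<not> u < \<delta>"
    hence "z \<in> K" unfolding K_def using u by auto
    thus False using zW W_def by auto
  qed
  have "(x, gx) \<in> {(x, t::real). g x \<le> ereal t}" using gxr gx_def by simp
  moreover have "(y, gy) \<in> {(x, t::real). g x \<le> ereal t}" using gyr gy_def by simp
  ultimately have "(1-u) *\<^sub>R (x, gx) + u *\<^sub>R (y, gy) \<in> {(x, t::real). g x \<le> ereal t}"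
    using cg u unfolding convex_efun_def convex_def
    by (metis (no_types, lifting) diff_add_cancel diff_ge_0_iff_ge add.commute)
  hence "g z \<le> ereal ((1-u) * gx + u * gy)" using u by (simp add: scaleR_prod_def)
  also have "(1-u) * gx + u * gy = gx + u * (gy - gx)" by (simp add: algebra_simps)
  finally have gz: "g z \<le> ereal (gx + u * (gy - gx))" .
  have "ereal (gx + u * (gy - gx)) < ereal c" using small[OF u(1) \<open>u < \<delta>\<close>] by simp
  with gz have "g z < ereal c" by (rule order.strict_trans1)
  moreover have "f z > ereal c" using zW W_def by auto
  moreover have "f z = g z" using zS eq by auto
  ultimately show False by simp
qed

theorem mainTheorem6:
  fixes f g :: "'a::{real_vector, t2_space} \<Rightarrow> ereal" and U :: "'a set"
  assumes "locally_convex_tvs TYPE('a)"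
    and "proper_fun f" and "convex_efun f" and "lsc_efun f"
    and "proper_fun g" and "convex_efun g" and "lsc_efun g"
    and "U \<subseteq> edom f \<inter> edom g"
    and "segment_dense U (edom f \<inter> edom g)"
    and "\<forall>u\<in>U. f u = g u"
  shows "\<forall>x\<in>edom f \<inter> edom g. f x = g x"
proof
  fix x assume x: "x \<in> edom f \<inter> edom g"
  have "f x \<le> g x" using half_ineq[OF assms(1,2,4,5,6,8,9,10) x] .
  moreover have "g x \<le> f x"
    using half_ineq[of g f U x] assms x by (auto simp: Int_commute)
  ultimately show "f x = g x" by simp
qed

end
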